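(* Let $0\le c<1$ and $0\le\delta\le q$ with $q>0$, and let $\mathbf A(\mu)=\begin{bmatrix}0&1-\delta\mu\\-c&1+c-q\mu\end{bmatrix}$. For any $k\ge1$ and any $\mu_1,\dots,\mu_k\in\big[0,\frac{(1-c)^2}{q-c\delta}\big]$, $$\Big\|\prod_{i=1}^k\mathbf A(\mu_i)\begin{bmatrix}1\\1\end{bmatrix}\Big\|\le2.$$
   Context: $\|\cdot\|$ denotes the Euclidean norm of a vector in $\mathbb R^2$; the product is an ordered matrix product. *)

theory Defs
  imports "HOL-Analysis.Analysis"
begin

definition Amat :: "real \<Rightarrow> real \<Rightarrow> real \<Rightarrow> real \<Rightarrow> real^2^2" where
  "Amat c \<delta> q \<mu> = vector [vector [0, 1 - \<delta> * \<mu>], vector [- c, 1 + c - q * \<mu>]]"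

fun Aprod :: "real \<Rightarrow> real \<Rightarrow> real \<Rightarrow> (nat \<Rightarrow> real) \<Rightarrow> nat \<Rightarrow> real^2^2" where
  "Aprod c \<delta> q \<mu> 0 = mat 1"
| "Aprod c \<delta> q \<mu> (Suc n) = Aprod c \<delta> q \<mu> n ** Amat c \<delta> q (\<mu> (Suc n))"

end

theory Submission imports Defs begin

lemma pmn: "0 < (a::real) \<Longrightarrow> 0 \<le> a * b \<Longrightarrow> 0 \<le> b"
  by (simp add: zero_le_mult_iff)

lemma core:
  fixes c u r s t :: real
  assumes c0: "0 \<le> c" and c1: "c < 1" and u0: "0 \<le> u" and u1: "u \<le> 1 - c"
    and r0: "0 \<le> r" and r1: "r \<le> 1"
  shows "(s - u*(s+c*t))^2 + (c*t + u*r*(s+c*t))^2 \<le> s^2 + t^2"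
proof -
  define w where "w = 1 - c"
  define p where "p = s + c*t"
  define D where "D = (\<lambda>u r. (s - u*p)^2 + (c*t + u*r*p)^2 - s^2 - t^2)"
  have w0: "w > 0" using c1 by (simp add: w_def)
  have h0: "D 0 r' \<le> 0" for r'
  proof -
    have "D 0 r' = (c^2 - 1) * t^2" by (simp add: D_def algebra_simps power2_eq_square)
    moreover have "c^2 \<le> 1" using c0 c1 by (simp add: power_le_one)
    ultimately show ?thesis by (simp add: mult_nonpos_nonneg)
  qed
  have h1: "D w 0 \<le> 0"
  proof -
    have id: "(w*(1+c)) * (- D w 0) = (w*(1+c)* s + c^2*w*t)^2 + w^2*(1+2*c)*t^2"
      by (simp add: D_def p_def w_def power2_eq_square algebra_simps)
    have "0 \<le> (w*(1+c)) * (- D w 0)" unfolding id using c0 by simp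
    moreover have "w*(1+c) > 0" using w0 c0 by simp
    ultimately show ?thesis using pmn[of "w*(1+c)" "- D w 0"] by simp
  qed
  have h2: "D w 1 \<le> 0"
  proof -
    have id: "(w^2*(1+2*c-2*c^2)) * (- D w 1) = (-2*c*w^2* s + w^2*(1+2*c-2*c^2)*t)^2 + 2*c*w^3* s^2"
      by (simp add: D_def p_def w_def power2_eq_square power3_eq_cube algebra_simps)
    have "0 \<le> (w^2*(1+2*c-2*c^2)) * (- D w 1)" unfolding id using c0 w0 by simp
    moreover have "w^2*(1+2*c-2*c^2) > 0"
    proof -
      have "1+2*c-2*c^2 = 1 + 2*c*(1-c)" by (simp add: algebra_simps power2_eq_square)
      also have "\<dots> > 0" using c0 c1 by (simp add: add_pos_nonneg)
      finally show ?thesis using w0 by simp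
    qed
    ultimately show ?thesis using pmn[of "w^2*(1+2*c-2*c^2)" "- D w 1"] by simp
  qed
  have h3: "D w r = (1-r) * D w 0 + r * D w 1 - r*(1-r)*w^2*p^2"
    by (simp add: D_def power2_eq_square algebra_simps)
  have h3': "D w r \<le> 0"
  proof -
    have "(1-r) * D w 0 \<le> 0" using h1 r1 by (simp add: mult_nonneg_nonpos)
    moreover have "r * D w 1 \<le> 0" using h2 r0 by (simp add: mult_nonneg_nonpos)
    moreover have "r*(1-r)*w^2*p^2 \<ge> 0" using r0 r1 by simp
    ultimately show ?thesis unfolding h3 by linarith
  qed
  have h4: "w * D u r = (w-u) * D 0 r + u * D w r - u*(w-u)*w*p^2*(1+r^2)"
    by (simp add: D_def power2_eq_square algebra_simps)
  have "w * D u r \<le> 0"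
  proof -
    have "(w-u) * D 0 r \<le> 0" using h0 u1 by (simp add: mult_nonneg_nonpos w_def)
    moreover have "u * D w r \<le> 0" using h3' u0 by (simp add: mult_nonneg_nonpos)
    moreover have "u*(w-u)*w*p^2*(1+r^2) \<ge> 0" using u0 u1 w0 by (simp add: w_def)
    ultimately show ?thesis unfolding h4 by linarith
  qed
  hence "D u r \<le> 0" using w0 by (simp add: mult_le_0_iff)
  thus ?thesis by (simp add: D_def p_def)
qed

definition W :: "real \<Rightarrow> real^2 \<Rightarrow> real" where
  "W c v = (v$2 - c * v$1)^2 + (v$1 - v$2)^2"

lemma Amat_mult:
  "(Amat c d q m *v v) $ 1 = (1 - d*m) * v$2"
  "(Amat c d q m *v v) $ 2 = - c * v$1 + (1 + c - q*m) * v$2"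
  by (simp_all add: Amat_def matrix_vector_mult_def sum_2)

lemma step:
  fixes c d q m :: real and v :: "real^2"
  assumes c0: "0 \<le> c" and c1: "c < 1" and d0: "0 \<le> d" and dq: "d \<le> q" and q0: "q > 0"
    and m0: "0 \<le> m" and m1: "m \<le> (1 - c)^2 / (q - c * d)"
  shows "W c (Amat c d q m *v v) \<le> W c v"
proof -
  define x where "x = v$1"
  define y where "y = v$2"
  define w where "w = 1 - c"
  define P where "P = q - c*d"
  have w0: "w > 0" using c1 by (simp add: w_def)
  have cd: "c*d \<le> d" using c1 d0 mult_right_mono[of c 1 d] by simp
  have P0: "P > 0"
  proof -
    have "c*d \<le> c*q" using c0 dq by (simp add: mult_left_mono)
    moreover have "c*q < q" using c1 q0 by simp
    ultimately show ?thesis by (simp add: P_def)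
  qed
  define s where "s = (y - c*x)/w"
  define t where "t = (x - y)/w"
  define u where "u = P*m/w"
  define r where "r = (q-d)/P"
  have u0: "0 \<le> u" using m0 P0 w0 by (simp add: u_def)
  have "P*m \<le> w^2" using m1 P0 by (simp add: P_def w_def pos_le_divide_eq mult.commute)
  hence u1: "u \<le> 1 - c" using w0 by (simp add: u_def w_def power2_eq_square divide_le_eq)
  have r0: "0 \<le> r" using dq P0 by (simp add: r_def)
  have r1: "r \<le> 1" using cd P0 by (simp add: r_def P_def)
  have key: "(s - u*(s+c*t))^2 + (c*t + u*r*(s+c*t))^2 \<le> s^2 + t^2"
    by (rule core[OF c0 c1 u0 u1 r0 r1])
  have sy: "s + c*t = y"
  proof -
    have "s + c*t = ((y - c*x) + c*(x-y))/w" by (simp add: s_def t_def add_divide_distrib)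
    also have "\<dots> = (y*w)/w" by (simp add: w_def algebra_simps)
    also have "\<dots> = y" using w0 by simp
    finally show ?thesis .
  qed
  have e1: "w * (s - u*y) = (y - c*x) - P*m*y" using w0 by (simp add: s_def u_def field_simps)
  have e2: "w*(c*t + u*r*y) = c*(x-y) + (q-d)*m*y" using w0 P0 by (simp add: t_def u_def r_def field_simps)
  have ws: "w * s = y - c*x" and wt: "w*t = x - y" using w0 by (simp_all add: s_def t_def)
  have "W c (Amat c d q m *v v) = ((y - c*x) - P*m*y)^2 + (c*(x-y) + (q-d)*m*y)^2"
    by (simp add: W_def Amat_mult x_def y_def P_def algebra_simps power2_eq_square)
  also have "\<dots> = w^2 * ((s - u*(s+c*t))^2 + (c*t + u*r*(s+c*t))^2)"
    unfolding sy e1[symmetric] e2[symmetric] by (simp add: power2_eq_square algebra_simps)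
  also have "\<dots> \<le> w^2 * (s^2 + t^2)" using key by (simp add: mult_left_mono)
  also have "\<dots> = W c v" unfolding W_def x_def[symmetric] y_def[symmetric] ws[symmetric] wt[symmetric]
    by (simp add: power2_eq_square algebra_simps)
  finally show ?thesis .
qed

lemma Wnorm:
  fixes v :: "real^2"
  assumes c0: "0 \<le> c" and c1: "c < 1" and h: "W c v \<le> (1-c)^2"
  shows "norm v \<le> 2"
proof -
  define x where "x = v$1"
  define y where "y = v$2"
  define X where "X = y - c*x"
  define T where "T = x - y"
  define w where "w = 1 - c"
  have w0: "w > 0" using c1 by (simp add: w_def)
  have hx: "w*x = X + T" and hy: "w*y = X + c*T" by (simp_all add: X_def T_def w_def algebra_simps)
  have hW: "X^2 + T^2 \<le> w^2" using h by (simp add: W_def X_def T_def x_def y_def w_def)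
  have c2: "c^2 \<le> 1" using c0 c1 by (simp add: power_le_one)
  have "w^2*(x^2+y^2) = (X+T)^2 + (X+c*T)^2" using hx hy by (simp add: power_mult_distrib[symmetric] algebra_simps)
  also have "\<dots> \<le> 2*(X^2+T^2) + 2*(X^2+c^2*T^2)"
  proof -
    have a: "2*X^2 + 2*T^2 - (X+T)^2 = (X-T)^2" by (simp add: power2_eq_square algebra_simps)
    have b: "2*X^2 + 2*(c^2*T^2) - (X+c*T)^2 = (X-c*T)^2" by (simp add: power2_eq_square algebra_simps)
    have "(X-T)^2 \<ge> 0" "(X-c*T)^2 \<ge> 0" by simp_all
    thus ?thesis using a b unfolding distrib_left by linarith
  qed
  also have "\<dots> \<le> 4*(X^2+T^2)" using c2 mult_right_mono[of "c^2" 1 "T^2"] by simp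
  also have "\<dots> \<le> 4*w^2" using hW by simp
  finally have "w^2*(x^2+y^2) \<le> w^2*4" by simp
  hence xy: "x^2+y^2 \<le> 4" using w0 by simp
  have "norm v = sqrt (x^2 + y^2)"
    by (simp add: norm_eq_sqrt_inner inner_vec_def sum_2 x_def y_def power2_eq_square)
  also have "\<dots> \<le> sqrt 4" using xy real_sqrt_le_mono by blast
  finally show ?thesis by simp
qed

lemma inv:
  fixes c \<delta> q :: real and \<mu> :: "nat \<Rightarrow> real"
  assumes c0: "0 \<le> c" and c1: "c < 1" and d0: "0 \<le> \<delta>" and dq: "\<delta> \<le> q" and q0: "q > 0"
  shows "(\<forall>i\<in>{1..n}. 0 \<le> \<mu> i \<and> \<mu> i \<le> (1 - c)^2 / (q - c * \<delta>)) \<Longrightarrow> W c v \<le> (1-c)^2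
     \<Longrightarrow> W c (Aprod c \<delta> q \<mu> n *v v) \<le> (1-c)^2"
proof (induction n arbitrary: v)
  case 0
  then show ?case by simp
next
  case (Suc n)
  have m: "0 \<le> \<mu> (Suc n)" "\<mu> (Suc n) \<le> (1 - c)^2 / (q - c * \<delta>)" using Suc.prems(1) by auto
  have "W c (Amat c \<delta> q (\<mu> (Suc n)) *v v) \<le> (1-c)^2"
    using step[OF c0 c1 d0 dq q0 m, of v] Suc.prems(2) by linarith
  moreover have "\<forall>i\<in>{1..n}. 0 \<le> \<mu> i \<and> \<mu> i \<le> (1 - c)^2 / (q - c * \<delta>)" using Suc.prems(1) by auto
  ultimately have "W c (Aprod c \<delta> q \<mu> n *v (Amat c \<delta> q (\<mu> (Suc n)) *v v)) \<le> (1-c)^2"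
    using Suc.IH by blast
  thus ?case by (simp add: matrix_vector_mul_assoc)
qed

theorem mainTheorem11:
  fixes c \<delta> q :: real and \<mu> :: "nat \<Rightarrow> real" and k :: nat
  assumes "0 \<le> c" "c < 1" "0 \<le> \<delta>" "\<delta> \<le> q" "q > 0"
    and "k \<ge> 1"
    and "\<forall>i\<in>{1..k}. 0 \<le> \<mu> i \<and> \<mu> i \<le> (1 - c)^2 / (q - c * \<delta>)"
  shows "norm (Aprod c \<delta> q \<mu> k *v (vector [1, 1] :: real^2)) \<le> 2"
proof -
  have "W c (vector [1, 1] :: real^2) \<le> (1-c)^2" by (simp add: W_def power2_eq_square algebra_simps)
  hence "W c (Aprod c \<delta> q \<mu> k *v (vector [1, 1] :: real^2)) \<le> (1-c)^2"
    using inv[OF assms(1-5)] assms(7) by blast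
  thus ?thesis using Wnorm assms(1,2) by blast
qed

end
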